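(* Let $k\ge2$, $a>2$, $n\ge2$, positive integers $p_1,\dots,p_k$, and real numbers $R_1^2,\dots,R_k^2\ge0$ with $\sum_{i=1}^kR_i^2<1$. Fix $m,j\in\{1,\dots,k\}$ (possibly $j=m$), and write $t_{-m}=\{t_i:i\ne m\}$. Let $f_1,f_2$ be the probability densities on $(0,1)$ defined by $$f_1(t_m)\propto\int_{(0,1)^{k-1}}\Big[\prod_{i=1}^k(1-t_i)^{\frac{a+p_i}{2}-2}\Big]\Big(1-\sum_{i=1}^kt_iR_i^2\Big)^{-\frac{n-1}{2}}dt_{-m},$$ $$f_2(t_m)\propto\int_{(0,1)^{k-1}}\Big[\prod_{i=1}^k(1-t_i)^{\frac{a+p_i}{2}-2}\Big](1-t_jR_j^2)^{-\frac{n-1}{2}}dt_{-m}.$$ Then $E_{f_1}(t_m)\ge E_{f_2}(t_m)$. Strict inequality holds when $R_m^2>0$ and $R_i^2>0$ for at least one $i\ne m$. *)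

theory Defs
  imports "HOL-Analysis.Analysis"
begin

text \<open>Indices run over {1..k}; a point of (0,1)^k is a function t :: nat \<Rightarrow> real.
  R2 i stands for R_i^2.\<close>

definition weight :: "nat \<Rightarrow> real \<Rightarrow> (nat \<Rightarrow> nat) \<Rightarrow> (nat \<Rightarrow> real) \<Rightarrow> real" where
  "weight k a p t = (\<Prod>i\<in>{1..k}. (1 - t i) powr ((a + real (p i)) / 2 - 2))"

definition g1 :: "nat \<Rightarrow> real \<Rightarrow> nat \<Rightarrow> (nat \<Rightarrow> nat) \<Rightarrow> (nat \<Rightarrow> real) \<Rightarrow> (nat \<Rightarrow> real) \<Rightarrow> real" where
  "g1 k a n p R2 t = weight k a p t * (1 - (\<Sum>i\<in>{1..k}. t i * R2 i)) powr (- (real n - 1) / 2)"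

definition g2 :: "nat \<Rightarrow> real \<Rightarrow> nat \<Rightarrow> (nat \<Rightarrow> nat) \<Rightarrow> (nat \<Rightarrow> real) \<Rightarrow> nat \<Rightarrow> (nat \<Rightarrow> real) \<Rightarrow> real" where
  "g2 k a n p R2 j t = weight k a p t * (1 - t j * R2 j) powr (- (real n - 1) / 2)"

definition marginal :: "nat \<Rightarrow> nat \<Rightarrow> ((nat \<Rightarrow> real) \<Rightarrow> real) \<Rightarrow> real \<Rightarrow> real" where
  "marginal k m g s =
     (LINT x : PiE ({1..k} - {m}) (\<lambda>_. {0<..<1::real}) | PiM ({1..k} - {m}) (\<lambda>_. lborel).
        g (x(m := s)))"

definition mean_prop :: "(real \<Rightarrow> real) \<Rightarrow> real" where
  "mean_prop h = (LBINT s : {0<..<1}. s * h s) / (LBINT s : {0<..<1}. h s)"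

end

theory Submission
  imports Defs
begin


interpretation lbp: product_sigma_finite "\<lambda>_::nat. lborel :: real measure"
  by standard

lemma L1:
  fixes c :: real assumes "c > -1"
  shows "integrable lborel (\<lambda>t. indicator {0<..<1::real} t * (1-t) powr c)"
proof -
  have "set_integrable lborel {0..1} (\<lambda>t::real. t powr (1 - 1) * (1 - t) powr ((c+1) - 1))"
    by (rule integrable_Beta) (use assms in auto)
  then have "set_integrable lborel {0<..<1} (\<lambda>t::real. t powr (1 - 1) * (1 - t) powr ((c+1) - 1))"
    by (rule set_integrable_subset) auto
  then have "integrable lborel (\<lambda>t::real. indicator {0<..<1} t * (t powr (1 - 1) * (1 - t) powr ((c+1) - 1)))"
    by (simp add: set_integrable_def)
  also have "(\<lambda>t::real. indicator {0<..<1} t * (t powr (1 - 1) * (1 - t) powr ((c+1) - 1)))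
     = (\<lambda>t. indicator {0<..<1::real} t * (1-t) powr c)"
    by (auto simp: indicator_def fun_eq_iff)
  finally show ?thesis .
qed

definition FF :: "nat set \<Rightarrow> (nat \<Rightarrow> real) \<Rightarrow> (nat \<Rightarrow> real) \<Rightarrow> real" where
  "FF I c x = (\<Prod>i\<in>I. indicator {0<..<1::real} (x i) * (1 - x i) powr c i)"

lemma L2:
  assumes "finite I" "\<forall>i\<in>I. c i > -1"
  shows "integrable (PiM I (\<lambda>_. lborel)) (FF I c)"
  unfolding FF_def
  by (rule lbp.product_integrable_prod) (use assms L1 in auto)

lemma FF_nonneg: "FF I c x \<ge> 0"
  unfolding FF_def by (intro prod_nonneg) (auto simp: indicator_def)

lemma FF_pos: "finite I \<Longrightarrow> x \<in> PiE I (\<lambda>_. {0<..<1}) \<Longrightarrow> FF I c x > 0"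
  unfolding FF_def by (intro prod_pos) (auto simp: indicator_def)

lemma FF_zero: "x \<in> space (PiM I (\<lambda>_. lborel)) \<Longrightarrow> x \<notin> PiE I (\<lambda>_. {0<..<1}) \<Longrightarrow> finite I \<Longrightarrow> FF I c x = 0"
  unfolding FF_def space_PiM by (subst prod_zero_iff) (auto simp: PiE_iff indicator_def)

lemma L3:
  assumes "finite I" "\<forall>i\<in>I. c i > -1"
    and meas: "\<phi> \<in> borel_measurable (PiM I (\<lambda>_. lborel::real measure))"
    and bnd: "\<And>x. x \<in> PiE I (\<lambda>_. {0<..<1}) \<Longrightarrow> \<bar>\<phi> x\<bar> \<le> K"
  shows "integrable (PiM I (\<lambda>_. lborel::real measure)) (\<lambda>x. FF I c x * \<phi> x)"
proof (rule Bochner_Integration.integrable_bound[OF _ _ AE_I2])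
  show "integrable (PiM I (\<lambda>_. lborel::real measure)) (\<lambda>x. FF I c x * K)"
    using L2[OF assms(1,2)] by simp
  show "(\<lambda>x. FF I c x * \<phi> x) \<in> borel_measurable (PiM I (\<lambda>_. lborel::real measure))"
    using L2[OF assms(1,2)] meas by measurable
  fix x assume x: "x \<in> space (PiM I (\<lambda>_. lborel::real measure))"
  show "norm (FF I c x * \<phi> x) \<le> norm (FF I c x * K)"
  proof (cases "x \<in> PiE I (\<lambda>_. {0<..<1})")
    case True
    have "\<bar>\<phi> x\<bar> \<le> \<bar>K\<bar>" using bnd[OF True] by linarith
    then show ?thesis using FF_nonneg[of I c x] by (simp add: abs_mult mult_left_mono)
  next
    case False then show ?thesis using FF_zero[OF x False assms(1)] by simp
  qed
qed

lemma L4: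
  fixes h :: "'a \<Rightarrow> real"
  assumes "integrable M h" "\<And>x. x \<in> space M \<Longrightarrow> h x \<ge> 0" "\<And>x. x \<in> D \<Longrightarrow> h x > 0"
    "D \<in> sets M" "emeasure M D \<noteq> 0"
  shows "integral\<^sup>L M h > 0"
proof -
  have ge: "integral\<^sup>L M h \<ge> 0" using assms(2) by (intro integral_nonneg_AE) auto
  have "\<not> (AE x in M. h x = 0)"
  proof
    assume "AE x in M. h x = 0"
    then have "AE x in M. x \<notin> D" by eventually_elim (use assms(3) in fastforce)
    moreover have "{x\<in>space M. \<not> x \<notin> D} = D" using sets.sets_into_space[OF assms(4)] by auto
    ultimately have "emeasure M D = 0" using AE_iff_measurable[OF assms(4), of "\<lambda>x. x \<notin> D"] by simp
    then show False using assms(5) by simp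
  qed
  then have "integral\<^sup>L M h \<noteq> 0" using integral_nonneg_eq_0_iff_AE[OF assms(1)] assms(2) by auto
  then show ?thesis using ge by simp
qed

lemma D_sets: "finite I \<Longrightarrow> PiE I (\<lambda>_. {0<..<1::real}) \<in> sets (PiM I (\<lambda>_. lborel))"
  by (rule sets_PiM_I_finite) auto

lemma D_meas: "finite (I::nat set) \<Longrightarrow> emeasure (PiM I (\<lambda>_. lborel)) (PiE I (\<lambda>_. {0<..<1::real})) = 1"
  by (simp add: lbp.emeasure_PiM)



lemma cheb:
  fixes f r :: "real \<Rightarrow> real"
  defines "ind \<equiv> indicator {0<..<1::real} :: real \<Rightarrow> real"
  assumes i1: "integrable lborel (\<lambda>s. ind s * f s)"
    and i2: "integrable lborel (\<lambda>s. ind s * (s * f s))"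
    and i3: "integrable lborel (\<lambda>s. ind s * (f s * r s))"
    and i4: "integrable lborel (\<lambda>s. ind s * (s * (f s * r s)))"
    and fpos: "\<And>s. s \<in> {0<..<1} \<Longrightarrow> f s > 0"
    and rpos: "\<And>s. s \<in> {0<..<1} \<Longrightarrow> r s > 0"
    and mono: "\<And>s t. s \<in> {0<..<1} \<Longrightarrow> t \<in> {0<..<1} \<Longrightarrow> s \<le> t \<Longrightarrow> r s \<le> r t"
  shows "mean_prop f \<le> mean_prop (\<lambda>s. f s * r s) \<and>
     ((\<forall>s t. s \<in> {0<..<1} \<longrightarrow> t \<in> {0<..<1} \<longrightarrow> s < t \<longrightarrow> r s < r t) \<longrightarrow> mean_prop f < mean_prop (\<lambda>s. f s * r s))"
proof -
  define F where "F = integral\<^sup>L lborel (\<lambda>s. ind s * f s)"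
  define Sf where "Sf = integral\<^sup>L lborel (\<lambda>s. ind s * (s * f s))"
  define H where "H = integral\<^sup>L lborel (\<lambda>s. ind s * (f s * r s))"
  define Sh where "Sh = integral\<^sup>L lborel (\<lambda>s. ind s * (s * (f s * r s)))"
  have fnn: "\<And>s. s \<in> {0<..<1} \<Longrightarrow> f s \<ge> 0" using fpos less_imp_le by blast
  have rnn: "\<And>s. s \<in> {0<..<1} \<Longrightarrow> r s \<ge> 0" using rpos less_imp_le by blast
  have sfl: "\<And>s. s \<in> {0<..<1} \<Longrightarrow> s * f s < f s"
  proof -
    fix s :: real assume "s \<in> {0<..<1}"
    then show "s * f s < f s" using fpos[of s] mult_strict_right_mono[of s 1 "f s"] by auto
  qed
  have Us: "{0<..<1::real} \<in> sets lborel" by simp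
  have Um: "emeasure lborel {0<..<1::real} \<noteq> 0" by simp
  have Fpos: "F > 0" unfolding F_def
    by (rule L4[OF i1 _ _ Us Um]) (auto simp: ind_def indicator_def intro: fnn fpos)
  have Hpos: "H > 0" unfolding H_def
    by (rule L4[OF i3 _ _ Us Um]) (auto simp: ind_def indicator_def intro!: fnn rnn fpos rpos mult_nonneg_nonneg mult_pos_pos)
  have Sfpos: "Sf > 0" unfolding Sf_def
    by (rule L4[OF i2 _ _ Us Um]) (auto simp: ind_def indicator_def intro!: fnn fpos mult_nonneg_nonneg mult_pos_pos)
  have "F - Sf = integral\<^sup>L lborel (\<lambda>s. ind s * f s - ind s * (s * f s))"
    unfolding F_def Sf_def using i1 i2 by simp
  also have "\<dots> > 0"
    by (rule L4[OF _ _ _ Us Um]) (use i1 i2 sfl in \<open>auto simp: ind_def indicator_def algebra_simps less_imp_le\<close>)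
  finally have SfF: "Sf < F" by simp
  define \<mu> where "\<mu> = Sf / F"
  have mu: "\<mu> \<in> {0<..<1}" unfolding \<mu>_def using Fpos Sfpos SfF by auto
  have mF: "\<mu> * F = Sf" unfolding \<mu>_def using Fpos by simp
  define g where "g = (\<lambda>s. ind s * (s * (f s * r s)) - \<mu> * (ind s * (f s * r s))
         - r \<mu> * (ind s * (s * f s)) + (r \<mu> * \<mu>) * (ind s * f s))"
  have gi: "integrable lborel g" unfolding g_def using i1 i2 i3 i4 by simp
  have gint: "integral\<^sup>L lborel g = Sh - \<mu> * H"
  proof -
    have "integral\<^sup>L lborel g = Sh - \<mu> * H - r \<mu> * Sf + (r \<mu> * \<mu>) * F"
      unfolding g_def Sh_def H_def Sf_def F_def using i1 i2 i3 i4 by simp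
    moreover have "r \<mu> * \<mu> * F = r \<mu> * Sf" using mF by (simp add: mult.assoc)
    ultimately show ?thesis by linarith
  qed
  have geq: "g s = ind s * ((s - \<mu>) * f s * (r s - r \<mu>))" for s
    unfolding g_def by (simp add: algebra_simps)
  have gnn: "g s \<ge> 0" for s
  proof (cases "s \<in> {0<..<1}")
    case True
    have "(s - \<mu>) * (r s - r \<mu>) \<ge> 0"
    proof (cases "s \<le> \<mu>")
      case True
      then show ?thesis using mono[OF \<open>s \<in> _\<close> mu True] by (intro mult_nonpos_nonpos) auto
    next
      case False
      then show ?thesis using mono[OF mu \<open>s \<in> _\<close>] by (intro mult_nonneg_nonneg) auto
    qed
    then show ?thesis unfolding geq using True fpos[OF True]
      by (simp add: ind_def mult.commute mult.left_commute)
  qed (simp add: geq ind_def)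
  have "Sh - \<mu> * H \<ge> 0" using gint gnn by (metis integral_nonneg_AE AE_I2)
  then have weak: "\<mu> \<le> Sh / H" using Hpos by (simp add: field_simps)
  have strict: "\<mu> < Sh / H" if st: "\<forall>s t. s \<in> {0<..<1} \<longrightarrow> t \<in> {0<..<1} \<longrightarrow> s < t \<longrightarrow> r s < r t"
  proof -
    have "0 < integral\<^sup>L lborel g"
    proof (rule L4[OF gi _ _ _ _])
      show "{0<..<1} - {\<mu>} \<in> sets lborel" by simp
      have "emeasure lborel ({0<..<1::real} - {\<mu>}) = emeasure lborel {0<..<1::real}"
        by (rule emeasure_Diff_null_set) auto
      then show "emeasure lborel ({0<..<1::real} - {\<mu>}) \<noteq> 0" by simp
      fix s assume s: "s \<in> {0<..<1} - {\<mu>}"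
      have "(s - \<mu>) * (r s - r \<mu>) > 0"
      proof (cases "s < \<mu>")
        case True
        then show ?thesis using st mu s by (intro mult_neg_neg) auto
      next
        case False
        then have "\<mu> < s" using s by auto
        then show ?thesis using st mu s by (intro mult_pos_pos) auto
      qed
      then show "g s > 0" unfolding geq using s fpos[of s]
        by (simp add: ind_def mult.commute mult.left_commute)
    qed (use gnn in auto)
    then show ?thesis using gint Hpos by (simp add: field_simps)
  qed
  have mpf: "mean_prop f = \<mu>"
    unfolding mean_prop_def \<mu>_def F_def Sf_def set_lebesgue_integral_def ind_def by simp
  have mph: "mean_prop (\<lambda>s. f s * r s) = Sh / H"
    unfolding mean_prop_def Sh_def H_def set_lebesgue_integral_def ind_def by simp
  show ?thesis using weak strict mpf mph by auto
qed



lemma L5: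
  fixes Q :: "real \<Rightarrow> real"
  assumes "c > -1" "Q \<in> borel_measurable borel" "\<And>s. s \<in> {0<..<1} \<Longrightarrow> \<bar>Q s\<bar> \<le> K"
  shows "integrable lborel (\<lambda>s. indicator {0<..<1::real} s * ((1-s) powr c * Q s))"
proof (rule Bochner_Integration.integrable_bound[OF _ _ AE_I2])
  show "integrable lborel (\<lambda>s. indicator {0<..<1::real} s * (1-s) powr c * K)"
    using L1[OF assms(1)] by simp
  show "(\<lambda>s. indicator {0<..<1::real} s * ((1-s) powr c * Q s)) \<in> borel_measurable lborel"
    using assms(2) by measurable
  fix s :: real
  show "norm (indicator {0<..<1::real} s * ((1-s) powr c * Q s)) \<le> norm (indicator {0<..<1::real} s * (1-s) powr c * K)"
  proof (cases "s \<in> {0<..<1}")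
    case True
    have "\<bar>Q s\<bar> \<le> \<bar>K\<bar>" using assms(3)[OF True] by linarith
    then show ?thesis using True by (simp add: abs_mult mult_left_mono)
  qed simp
qed

lemma meas_int:
  fixes \<psi> :: "real \<Rightarrow> (nat \<Rightarrow> real) \<Rightarrow> real"
  assumes "finite I" "\<forall>i\<in>I. c i > -1"
    and m: "(\<lambda>(s,x). \<psi> s x) \<in> borel_measurable (borel \<Otimes>\<^sub>M PiM I (\<lambda>_. lborel::real measure))"
  shows "(\<lambda>s. \<integral>x. FF I c x * \<psi> s x \<partial>PiM I (\<lambda>_. lborel::real measure)) \<in> borel_measurable borel"
proof -
  interpret Mi: sigma_finite_measure "PiM I (\<lambda>_. lborel::real measure)"
    using lbp.sigma_finite[OF assms(1)] .
  have FFm: "FF I c \<in> borel_measurable (PiM I (\<lambda>_. lborel::real measure))"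
    using L2[OF assms(1,2)] by measurable
  show ?thesis
  proof (rule Mi.borel_measurable_lebesgue_integral)
    have "(\<lambda>z::real \<times> (nat \<Rightarrow> real). FF I c (snd z) * (case z of (s,x) \<Rightarrow> \<psi> s x)) \<in> borel_measurable (borel \<Otimes>\<^sub>M PiM I (\<lambda>_. lborel::real measure))"
      using FFm m by measurable
    then show "(\<lambda>(s,x). FF I c x * \<psi> s x) \<in> borel_measurable (borel \<Otimes>\<^sub>M PiM I (\<lambda>_. lborel::real measure))"
      by (simp add: case_prod_beta')
  qed
qed

lemma test1:
  fixes E :: real and R2 :: "nat \<Rightarrow> real"
  assumes "finite I"
  shows "(\<lambda>(s,x). (1 - (s * R2 m + (\<Sum>i\<in>I. x i * R2 i))) powr E) \<in> borel_measurable (borel \<Otimes>\<^sub>M PiM I (\<lambda>_. lborel::real measure))"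
  by measurable

lemma test2:
  fixes E :: real and R2 :: "nat \<Rightarrow> real"
  assumes "j \<in> I"
  shows "(\<lambda>(s,x::nat\<Rightarrow>real). (1 - x j * R2 j) powr E) \<in> borel_measurable (borel \<Otimes>\<^sub>M PiM I (\<lambda>_. lborel::real measure))"
  using assms by measurable

lemma meas1:
  fixes E :: real and R2 :: "nat \<Rightarrow> real"
  assumes "finite I"
  shows "(\<lambda>x. (1 - (s * R2 m + (\<Sum>i\<in>I. x i * R2 i))) powr E) \<in> borel_measurable (PiM I (\<lambda>_. lborel::real measure))"
  by measurable

lemma meas2:
  fixes E :: real and R2 :: "nat \<Rightarrow> real"
  assumes "j \<in> I"
  shows "(\<lambda>x::nat\<Rightarrow>real. (1 - x j * R2 j) powr E) \<in> borel_measurable (PiM I (\<lambda>_. lborel::real measure))"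
  using assms by measurable

lemma test3:
  fixes E :: real and R2 :: "nat \<Rightarrow> real"
  shows "(\<lambda>(s,x::nat\<Rightarrow>real). (1 - s * R2 j) powr E) \<in> borel_measurable (borel \<Otimes>\<^sub>M PiM I (\<lambda>_. lborel::real measure))"
  by measurable



lemma mean_prop_cong:
  assumes "\<And>s. s \<in> {0<..<1} \<Longrightarrow> h s = h2 s"
  shows "mean_prop h = mean_prop h2"
proof -
  have "(\<lambda>s. indicator {0<..<1::real} s *\<^sub>R (s * h s)) = (\<lambda>s. indicator {0<..<1::real} s *\<^sub>R (s * h2 s))"
    using assms by (auto simp: fun_eq_iff indicator_def)
  moreover have "(\<lambda>s. indicator {0<..<1::real} s *\<^sub>R h s) = (\<lambda>s. indicator {0<..<1::real} s *\<^sub>R h2 s)"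
    using assms by (auto simp: fun_eq_iff indicator_def)
  ultimately show ?thesis unfolding mean_prop_def set_lebesgue_integral_def by simp
qed

theorem lemma4p2:
  fixes k n m j :: nat and a :: real and p :: "nat \<Rightarrow> nat" and R2 :: "nat \<Rightarrow> real"
  assumes "k \<ge> 2" and "a > 2" and "n \<ge> 2"
    and "\<forall>i\<in>{1..k}. p i > 0"
    and "\<forall>i\<in>{1..k}. R2 i \<ge> 0"
    and "(\<Sum>i\<in>{1..k}. R2 i) < 1"
    and "m \<in> {1..k}" and "j \<in> {1..k}"
  shows "mean_prop (marginal k m (g1 k a n p R2)) \<ge> mean_prop (marginal k m (g2 k a n p R2 j))
       \<and> ((R2 m > 0 \<and> (\<exists>i\<in>{1..k} - {m}. R2 i > 0)) \<longrightarrow>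
           mean_prop (marginal k m (g1 k a n p R2)) > mean_prop (marginal k m (g2 k a n p R2 j)))"
proof -
  define I where "I = {1..k} - {m}"
  define M where "M = PiM I (\<lambda>_. lborel::real measure)"
  define D where "D = PiE I (\<lambda>_. {0<..<1::real})"
  define c where "c = (\<lambda>i. (a + real (p i)) / 2 - 2)"
  define E where "E = - (real n - 1) / 2"
  define S where "S = (\<lambda>x::nat\<Rightarrow>real. \<Sum>i\<in>I. x i * R2 i)"
  define \<delta> where "\<delta> = 1 - (\<Sum>i\<in>{1..k}. R2 i)"
  define \<phi>1 where "\<phi>1 = (\<lambda>s x. (1 - (s * R2 m + S x)) powr E)"
  define \<phi>2 where "\<phi>2 = (\<lambda>s (x::nat\<Rightarrow>real). (1 - (if j = m then s else x j) * R2 j) powr E)"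
  define A where "A = (\<lambda>s. \<integral>x. FF I c x * \<phi>1 s x \<partial>M)"
  define B where "B = (\<lambda>s. \<integral>x. FF I c x * \<phi>2 s x \<partial>M)"
  define C where "C = (\<integral>x. FF I c x \<partial>M)"
  define U where "U = {0<..<1::real}"
  have finI: "finite I" by (simp add: I_def)
  have mI: "m \<notin> I" and kI: "{1..k} = insert m I" using assms(7) by (auto simp: I_def)
  have cpos: "\<forall>i\<in>I. c i > -1"
  proof
    fix i assume "i \<in> I"
    then have "p i > 0" using assms(4) by (auto simp: I_def)
    then have "p i \<ge> 1" by simp
    then show "c i > -1" using assms(2) unfolding c_def by simp
  qed
  have Eneg: "E < 0" using assms(3) by (simp add: E_def)
  have \<delta>pos: "\<delta> > 0" using assms(6) by (simp add: \<delta>_def)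
  have R2nn: "\<And>i. i \<in> {1..k} \<Longrightarrow> R2 i \<ge> 0" using assms(5) by auto
  have sumk: "(\<Sum>i\<in>{1..k}. R2 i) = R2 m + (\<Sum>i\<in>I. R2 i)"
    unfolding kI using finI mI by simp
  have FFi: "integrable M (FF I c)" unfolding M_def using L2[OF finI cpos] .
  have Dsets: "D \<in> sets M" unfolding D_def M_def using D_sets[OF finI] .
  have Dmeas: "emeasure M D \<noteq> 0" unfolding D_def M_def using D_meas[OF finI] by simp
  have FF0: "\<And>x. x \<in> space M \<Longrightarrow> x \<notin> D \<Longrightarrow> FF I c x = 0"
    unfolding M_def D_def using FF_zero finI by blast
  have FFpos: "\<And>x. x \<in> D \<Longrightarrow> FF I c x > 0" unfolding D_def using FF_pos finI by blast
  have FFnn: "\<And>x. FF I c x \<ge> 0" by (rule FF_nonneg)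
  have FFD: "\<And>x. x \<in> D \<Longrightarrow> FF I c x = (\<Prod>i\<in>I. (1 - x i) powr c i)"
    unfolding FF_def D_def by (auto intro!: prod.cong simp: PiE_iff)
  have sumb: "0 \<le> S x \<and> s * R2 m + S x \<le> 1 - \<delta>" if x: "x \<in> D" and s: "s \<in> U" for x s
  proof -
    have xi: "\<And>i. i \<in> I \<Longrightarrow> 0 < x i \<and> x i < 1" using x by (auto simp: D_def PiE_iff)
    have RI: "\<And>i. i \<in> I \<Longrightarrow> R2 i \<ge> 0" using R2nn by (auto simp: I_def)
    have "0 \<le> S x" unfolding S_def using xi RI by (intro sum_nonneg) (simp add: less_imp_le)
    moreover have "S x \<le> (\<Sum>i\<in>I. R2 i)" unfolding S_def using xi RI
      by (intro sum_mono mult_left_le_one_le) (auto simp: less_imp_le)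
    moreover have "s * R2 m \<le> R2 m" using s R2nn[OF assms(7)] by (intro mult_left_le_one_le) (auto simp: U_def)
    ultimately show ?thesis using sumk by (simp add: \<delta>_def)
  qed
  have Rj: "R2 j \<le> 1 - \<delta>" unfolding \<delta>_def using assms(8) R2nn
    using member_le_sum[of j "{1..k}" R2] by auto
  have Rjnn: "R2 j \<ge> 0" using R2nn assms(8) by simp
  have \<phi>1b: "0 < \<phi>1 s x \<and> \<phi>1 s x \<le> \<delta> powr E" if x: "x \<in> D" and s: "s \<in> U" for x s
  proof -
    have b: "\<delta> \<le> 1 - (s * R2 m + S x)" using sumb[OF x s] by simp
    have "(1 - (s * R2 m + S x)) powr E \<le> \<delta> powr E"
      using powr_mono2'[OF less_imp_le[OF Eneg] \<delta>pos b] .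
    moreover have "0 < (1 - (s * R2 m + S x)) powr E" using b \<delta>pos by simp
    ultimately show ?thesis unfolding \<phi>1_def by simp
  qed
  have tU: "(if j = m then s else x j) \<in> U" if x: "x \<in> D" and s: "s \<in> U" for x s
    using x s assms(8) by (auto simp: D_def PiE_iff I_def U_def)
  have \<phi>2b: "0 < \<phi>2 s x \<and> \<phi>2 s x \<le> \<delta> powr E" if x: "x \<in> D" and s: "s \<in> U" for x s
  proof -
    define t where "t = (if j = m then s else x j)"
    have t: "0 < t" "t < 1" using tU[OF x s] by (auto simp: t_def U_def)
    have "t * R2 j \<le> R2 j" using t Rjnn by (intro mult_left_le_one_le) auto
    then have b: "\<delta> \<le> 1 - t * R2 j" using Rj by simp
    have "(1 - t * R2 j) powr E \<le> \<delta> powr E"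
      using powr_mono2'[OF less_imp_le[OF Eneg] \<delta>pos b] .
    moreover have "0 < (1 - t * R2 j) powr E" using b \<delta>pos by simp
    ultimately show ?thesis unfolding \<phi>2_def t_def by simp
  qed
  have \<phi>1nn: "\<phi>1 s x \<ge> 0" for s x unfolding \<phi>1_def by simp
  have \<phi>2nn: "\<phi>2 s x \<ge> 0" for s x unfolding \<phi>2_def by simp
  have m\<phi>1: "\<phi>1 s \<in> borel_measurable M" for s
    unfolding \<phi>1_def S_def M_def using meas1[OF finI, of s R2 m E] .
  have m\<phi>2: "\<phi>2 s \<in> borel_measurable M" for s
  proof (cases "j = m")
    case True then show ?thesis unfolding \<phi>2_def by simp
  next
    case False then have "j \<in> I" using assms(8) by (simp add: I_def)
    then show ?thesis using False meas2[of j I R2 E] unfolding \<phi>2_def M_def by simp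
  qed
  have mA: "A \<in> borel_measurable borel"
  proof -
    have "(\<lambda>(s,x). \<phi>1 s x) \<in> borel_measurable (borel \<Otimes>\<^sub>M PiM I (\<lambda>_. lborel::real measure))"
      unfolding \<phi>1_def S_def using test1[OF finI, of R2 m E] .
    from meas_int[OF finI cpos this] show ?thesis unfolding A_def M_def .
  qed
  have mB: "B \<in> borel_measurable borel"
  proof -
    have "(\<lambda>(s,x). \<phi>2 s x) \<in> borel_measurable (borel \<Otimes>\<^sub>M PiM I (\<lambda>_. lborel::real measure))"
    proof (cases "j = m")
      case True then show ?thesis unfolding \<phi>2_def using test3[of R2 j E I] by simp
    next
      case False then have "j \<in> I" using assms(8) by (simp add: I_def)
      then show ?thesis using False test2[of j I R2 E] unfolding \<phi>2_def by simp
    qed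
    from meas_int[OF finI cpos this] show ?thesis unfolding B_def M_def .
  qed
  have i\<phi>1: "integrable M (\<lambda>x. FF I c x * \<phi>1 s x)" if s: "s \<in> U" for s
    unfolding M_def
  proof (rule L3[OF finI cpos, where K="\<delta> powr E"])
    show "\<phi>1 s \<in> borel_measurable (PiM I (\<lambda>_. lborel))" using m\<phi>1[of s] by (simp add: M_def)
    fix x assume "x \<in> PiE I (\<lambda>_. {0<..<1::real})"
    then have "x \<in> D" by (simp add: D_def)
    from \<phi>1b[OF this s] show "\<bar>\<phi>1 s x\<bar> \<le> \<delta> powr E" by simp
  qed
  have i\<phi>2: "integrable M (\<lambda>x. FF I c x * \<phi>2 s x)" if s: "s \<in> U" for s
    unfolding M_def
  proof (rule L3[OF finI cpos, where K="\<delta> powr E"])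
    show "\<phi>2 s \<in> borel_measurable (PiM I (\<lambda>_. lborel))" using m\<phi>2[of s] by (simp add: M_def)
    fix x assume "x \<in> PiE I (\<lambda>_. {0<..<1::real})"
    then have "x \<in> D" by (simp add: D_def)
    from \<phi>2b[OF this s] show "\<bar>\<phi>2 s x\<bar> \<le> \<delta> powr E" by simp
  qed
  have Ab: "0 < A s \<and> A s \<le> \<delta> powr E * C" if s: "s \<in> U" for s
  proof
    show "0 < A s" unfolding A_def
      by (rule L4[OF i\<phi>1[OF s] _ _ Dsets Dmeas])
         (use FFnn \<phi>1nn FFpos \<phi>1b[OF _ s] in \<open>auto intro!: mult_nonneg_nonneg mult_pos_pos\<close>)
    have "A s \<le> (\<integral>x. FF I c x * \<delta> powr E \<partial>M)" unfolding A_def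
    proof (rule integral_mono[OF i\<phi>1[OF s]])
      show "integrable M (\<lambda>x. FF I c x * \<delta> powr E)" using FFi by simp
      fix x assume x: "x \<in> space M"
      show "FF I c x * \<phi>1 s x \<le> FF I c x * \<delta> powr E"
      proof (cases "x \<in> D")
        case True then show ?thesis using \<phi>1b[OF True s] FFnn by (intro mult_left_mono) auto
      qed (use FF0[OF x] in simp)
    qed
    then show "A s \<le> \<delta> powr E * C" unfolding C_def by (simp add: mult.commute)
  qed
  have Bb: "0 < B s \<and> B s \<le> \<delta> powr E * C" if s: "s \<in> U" for s
  proof
    show "0 < B s" unfolding B_def
      by (rule L4[OF i\<phi>2[OF s] _ _ Dsets Dmeas])
         (use FFnn \<phi>2nn FFpos \<phi>2b[OF _ s] in \<open>auto intro!: mult_nonneg_nonneg mult_pos_pos\<close>)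
    have "B s \<le> (\<integral>x. FF I c x * \<delta> powr E \<partial>M)" unfolding B_def
    proof (rule integral_mono[OF i\<phi>2[OF s]])
      show "integrable M (\<lambda>x. FF I c x * \<delta> powr E)" using FFi by simp
      fix x assume x: "x \<in> space M"
      show "FF I c x * \<phi>2 s x \<le> FF I c x * \<delta> powr E"
      proof (cases "x \<in> D")
        case True then show ?thesis using \<phi>2b[OF True s] FFnn by (intro mult_left_mono) auto
      qed (use FF0[OF x] in simp)
    qed
    then show "B s \<le> \<delta> powr E * C" unfolding C_def by (simp add: mult.commute)
  qed
  have fW: "weight k a p (x(m:=s)) = (1-s) powr c m * FF I c x" if x: "x \<in> D" for x s
  proof -
    have "weight k a p (x(m:=s)) = (1-s) powr c m * (\<Prod>i\<in>I. (1 - x i) powr c i)"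
      unfolding weight_def kI c_def using finI mI
      by (simp add: prod.insert) (auto intro!: prod.cong)
    then show ?thesis using FFD[OF x] by simp
  qed
  have fS: "(\<Sum>i\<in>{1..k}. (x(m:=s)) i * R2 i) = s * R2 m + S x" for x s
    unfolding kI S_def using finI mI by (simp add: sum.insert) (auto intro!: sum.cong)
  have marg: "marginal k m g s = (\<integral>x. indicator D x * g (x(m:=s)) \<partial>M)" for g s
    unfolding marginal_def set_lebesgue_integral_def M_def D_def I_def by simp
  have mg1: "marginal k m (g1 k a n p R2) s = (1-s) powr c m * A s" for s
  proof -
    have "marginal k m (g1 k a n p R2) s = (\<integral>x. (1-s) powr c m * (FF I c x * \<phi>1 s x) \<partial>M)"
      unfolding marg
    proof (rule Bochner_Integration.integral_cong[OF refl])
      fix x assume x: "x \<in> space M"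
      show "indicator D x * g1 k a n p R2 (x(m := s)) = (1-s) powr c m * (FF I c x * \<phi>1 s x)"
      proof (cases "x \<in> D")
        case True
        then show ?thesis unfolding g1_def fW[OF True] fS \<phi>1_def E_def by simp
      qed (use FF0[OF x] in simp)
    qed
    then show ?thesis unfolding A_def by simp
  qed
  have mg2: "marginal k m (g2 k a n p R2 j) s = (1-s) powr c m * B s" for s
  proof -
    have "marginal k m (g2 k a n p R2 j) s = (\<integral>x. (1-s) powr c m * (FF I c x * \<phi>2 s x) \<partial>M)"
      unfolding marg
    proof (rule Bochner_Integration.integral_cong[OF refl])
      fix x assume x: "x \<in> space M"
      show "indicator D x * g2 k a n p R2 j (x(m := s)) = (1-s) powr c m * (FF I c x * \<phi>2 s x)"
      proof (cases "x \<in> D")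
        case True
        then show ?thesis unfolding g2_def fW[OF True] \<phi>2_def E_def by simp
      qed (use FF0[OF x] in simp)
    qed
    then show ?thesis unfolding B_def by simp
  qed
  have IM: "(\<integral>x. FF I c x * \<alpha> x \<partial>M) \<le> (\<integral>x. FF I c x * \<beta> x \<partial>M)"
    if ia: "integrable M (\<lambda>x. FF I c x * \<alpha> x)" and ib: "integrable M (\<lambda>x. FF I c x * \<beta> x)"
      and le: "\<And>x. x \<in> D \<Longrightarrow> \<alpha> x \<le> \<beta> x" for \<alpha> \<beta>
  proof (rule integral_mono[OF ia ib])
    fix x assume x: "x \<in> space M"
    show "FF I c x * \<alpha> x \<le> FF I c x * \<beta> x"
    proof (cases "x \<in> D")
      case True then show ?thesis using le[OF True] FFnn by (intro mult_left_mono) auto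
    qed (use FF0[OF x] in simp)
  qed
  have IMs: "(\<integral>x. FF I c x * \<alpha> x \<partial>M) < (\<integral>x. FF I c x * \<beta> x \<partial>M)"
    if ia: "integrable M (\<lambda>x. FF I c x * \<alpha> x)" and ib: "integrable M (\<lambda>x. FF I c x * \<beta> x)"
      and lt: "\<And>x. x \<in> D \<Longrightarrow> \<alpha> x < \<beta> x" for \<alpha> \<beta>
  proof -
    have "0 < (\<integral>x. FF I c x * \<beta> x - FF I c x * \<alpha> x \<partial>M)"
    proof (rule L4[OF _ _ _ Dsets Dmeas])
      show "integrable M (\<lambda>x. FF I c x * \<beta> x - FF I c x * \<alpha> x)" using ia ib by simp
      fix x
      show "x \<in> D \<Longrightarrow> 0 < FF I c x * \<beta> x - FF I c x * \<alpha> x"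
        using lt[of x] FFpos[of x] by (simp add: right_diff_distrib[symmetric])
      assume x: "x \<in> space M"
      show "0 \<le> FF I c x * \<beta> x - FF I c x * \<alpha> x"
      proof (cases "x \<in> D")
        case True then show ?thesis using lt[OF True] FFpos[OF True] by (simp add: right_diff_distrib[symmetric])
      qed (use FF0[OF x] in simp)
    qed
    then show ?thesis using ia ib by simp
  qed
  have Rm: "R2 m \<le> 1 - \<delta>" unfolding \<delta>_def using assms(7) R2nn
    using member_le_sum[of m "{1..k}" R2] by auto
  have Rmnn: "R2 m \<ge> 0" using R2nn assms(7) by simp
  have zb: "\<delta> \<le> 1 - s * R2 m" if s: "s \<in> U" for s
  proof -
    have "s * R2 m \<le> R2 m" using s Rmnn by (intro mult_left_le_one_le) (auto simp: U_def)
    then show ?thesis using Rm by simp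
  qed
  have \<phi>1mono: "\<phi>1 s x \<le> \<phi>1 t x \<and> (s < t \<and> R2 m > 0 \<longrightarrow> \<phi>1 s x < \<phi>1 t x)"
    if x: "x \<in> D" and s: "s \<in> U" and t: "t \<in> U" and st: "s \<le> t" for x s t
  proof -
    have bt: "\<delta> \<le> 1 - (t * R2 m + S x)" using sumb[OF x t] by simp
    have le: "s * R2 m \<le> t * R2 m" using st Rmnn by (rule mult_right_mono)
    have "(1 - (s * R2 m + S x)) powr E \<le> (1 - (t * R2 m + S x)) powr E"
      by (rule powr_mono2') (use Eneg \<delta>pos bt le in auto)
    moreover have "(1 - (s * R2 m + S x)) powr E < (1 - (t * R2 m + S x)) powr E" if "s < t" "R2 m > 0"
    proof -
      have "s * R2 m < t * R2 m" using that by simp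
      then show ?thesis by (intro powr_less_mono2_neg) (use Eneg \<delta>pos bt in auto)
    qed
    ultimately show ?thesis unfolding \<phi>1_def by blast
  qed
  have cm: "c m > -1"
  proof -
    have "p m > 0" using assms(4,7) by auto
    then have "p m \<ge> 1" by simp
    then show ?thesis using assms(2) unfolding c_def by simp
  qed
  define r where "r = (\<lambda>s. A s / B s)"
  define f' where "f' = (\<lambda>s. (1-s) powr c m * B s)"
  have rpos: "r s > 0" if "s \<in> U" for s using Ab[OF that] Bb[OF that] by (simp add: r_def)
  have rmono: "r s \<le> r t \<and> ((R2 m > 0 \<and> (\<exists>i\<in>I. R2 i > 0)) \<and> s < t \<longrightarrow> r s < r t)"
    if s: "s \<in> U" and t: "t \<in> U" and st: "s \<le> t" for s t
  proof (cases "j = m")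
    case False
    have Bc: "B t = B s" unfolding B_def \<phi>2_def using False by simp
    have "A s \<le> A t" unfolding A_def
      by (rule IM[OF i\<phi>1[OF s] i\<phi>1[OF t]]) (use \<phi>1mono[OF _ s t st] in blast)
    moreover have "A s < A t" if "R2 m > 0" "s < t" unfolding A_def
      by (rule IMs[OF i\<phi>1[OF s] i\<phi>1[OF t]]) (use \<phi>1mono[OF _ s t st] that in blast)
    ultimately show ?thesis using Bb[OF s] unfolding r_def Bc
      by (auto intro: divide_right_mono divide_strict_right_mono)
  next
    case True
    define \<psi> where "\<psi> = (\<lambda>s x. ((1 - (s * R2 m + S x)) / (1 - s * R2 m)) powr E)"
    have Bf: "B u = (1 - u * R2 m) powr E * C" for u
      unfolding B_def \<phi>2_def C_def using True by simp
    define G where "G = (\<lambda>u. (\<integral>x. FF I c x * \<psi> u x \<partial>M))"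
    have iG: "integrable M (\<lambda>x. FF I c x * \<psi> u x)" and Gf: "r u = G u / C" if u: "u \<in> U" for u
    proof -
      have zp: "(1 - u * R2 m) powr E > 0" using zb[OF u] \<delta>pos by simp
      have eq: "(\<lambda>x. FF I c x * \<psi> u x) = (\<lambda>x. FF I c x * \<phi>1 u x / (1 - u * R2 m) powr E)"
        unfolding \<psi>_def \<phi>1_def by (simp add: powr_divide)
      show "integrable M (\<lambda>x. FF I c x * \<psi> u x)" unfolding eq using i\<phi>1[OF u] by simp
      have "G u = A u / (1 - u * R2 m) powr E" unfolding G_def A_def eq by simp
      then show "r u = G u / C" unfolding r_def Bf using zp by simp
    qed
    have Cpos: "C > 0" using Bb[OF s] Bf[of s] zb[OF s] \<delta>pos
      by (simp add: zero_less_mult_iff)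
    have \<psi>mono: "\<psi> s x \<le> \<psi> t x \<and> (s < t \<and> R2 m > 0 \<and> S x > 0 \<longrightarrow> \<psi> s x < \<psi> t x)" if x: "x \<in> D" for x
    proof -
      define zs where "zs = 1 - s * R2 m"
      define zt where "zt = 1 - t * R2 m"
      have Sx: "S x \<ge> 0" and bt: "\<delta> \<le> zt - S x" using sumb[OF x t] by (auto simp: zt_def)
      have le: "zt \<le> zs" unfolding zs_def zt_def using mult_right_mono[OF st Rmnn] by simp
      have ztp: "zt > 0" using bt Sx \<delta>pos by simp
      have ys: "(1 - (s * R2 m + S x)) / (1 - s * R2 m) = 1 - S x / zs"
        using ztp le by (simp add: zs_def field_simps)
      have yt: "(1 - (t * R2 m + S x)) / (1 - t * R2 m) = 1 - S x / zt"
        using ztp by (simp add: zt_def field_simps)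
      have ytp: "0 < 1 - S x / zt" using bt ztp \<delta>pos by (simp add: field_simps)
      have d1: "S x / zs \<le> S x / zt" using Sx ztp le by (intro divide_left_mono) auto
      have "(1 - S x / zs) powr E \<le> (1 - S x / zt) powr E"
        by (rule powr_mono2') (use Eneg ytp d1 in auto)
      moreover have "(1 - S x / zs) powr E < (1 - S x / zt) powr E" if "s < t" "R2 m > 0" "S x > 0"
      proof -
        have "zt < zs" unfolding zs_def zt_def using that by simp
        then have "S x / zs < S x / zt" using that ztp by (intro divide_strict_left_mono) auto
        then show ?thesis by (intro powr_less_mono2_neg) (use Eneg ytp in auto)
      qed
      ultimately show ?thesis unfolding \<psi>_def ys yt by blast
    qed
    have "G s \<le> G t" unfolding G_def
      by (rule IM[OF iG[OF s] iG[OF t]]) (use \<psi>mono in blast)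
    moreover have "G s < G t" if hh: "R2 m > 0" "\<exists>i\<in>I. R2 i > 0" "s < t"
    proof -
      obtain i where i: "i \<in> I" "R2 i > 0" using hh(2) by blast
      have "S x > 0" if x: "x \<in> D" for x
        unfolding S_def
      proof (rule sum_pos2[OF finI i(1)])
        show "0 < x i * R2 i" using x i by (auto simp: D_def PiE_iff)
        fix l assume l: "l \<in> I"
        then have "x l > 0" "R2 l \<ge> 0" using x R2nn by (auto simp: D_def PiE_iff I_def)
        then show "0 \<le> x l * R2 l" by simp
      qed
      then show ?thesis unfolding G_def
        by (intro IMs[OF iG[OF s] iG[OF t]]) (use \<psi>mono hh in blast)
    qed
    ultimately show ?thesis unfolding Gf[OF s] Gf[OF t] using Cpos
      by (auto intro: divide_right_mono divide_strict_right_mono)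
  qed
  have e1: "mean_prop (marginal k m (g1 k a n p R2)) = mean_prop (\<lambda>s. f' s * r s)"
  proof (rule mean_prop_cong)
    fix s :: real assume "s \<in> {0<..<1}"
    then have "B s > 0" using Bb by (simp add: U_def)
    then show "marginal k m (g1 k a n p R2) s = f' s * r s" unfolding mg1 f'_def r_def by simp
  qed
  have e2: "mean_prop (marginal k m (g2 k a n p R2 j)) = mean_prop f'"
    by (rule mean_prop_cong) (simp add: mg2 f'_def)
  have Bbd: "\<bar>B s\<bar> \<le> \<delta> powr E * C" if "s \<in> {0<..<1}" for s
    using Bb[of s] that by (simp add: U_def)
  have Abd: "\<bar>A s\<bar> \<le> \<delta> powr E * C" if "s \<in> {0<..<1}" for s
    using Ab[of s] that by (simp add: U_def)
  have sBbd: "\<bar>s * B s\<bar> \<le> \<delta> powr E * C" if "s \<in> {0<..<1}" for s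
  proof -
    have "\<bar>s * B s\<bar> = s * B s" using Bb[of s] that by (simp add: U_def)
    also have "\<dots> \<le> B s" using Bb[of s] that by (intro mult_left_le_one_le) (auto simp: U_def)
    finally show ?thesis using Bbd[OF that] by simp
  qed
  have sAbd: "\<bar>s * A s\<bar> \<le> \<delta> powr E * C" if "s \<in> {0<..<1}" for s
  proof -
    have "\<bar>s * A s\<bar> = s * A s" using Ab[of s] that by (simp add: U_def)
    also have "\<dots> \<le> A s" using Ab[of s] that by (intro mult_left_le_one_le) (auto simp: U_def)
    finally show ?thesis using Abd[OF that] by simp
  qed
  have msA: "(\<lambda>s. s * A s) \<in> borel_measurable borel" using mA by measurable
  have msB: "(\<lambda>s. s * B s) \<in> borel_measurable borel" using mB by measurable
  have i1: "integrable lborel (\<lambda>s. indicator {0<..<1::real} s * f' s)"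
    unfolding f'_def by (rule L5[OF cm mB Bbd])
  have i2: "integrable lborel (\<lambda>s. indicator {0<..<1::real} s * (s * f' s))"
    using L5[OF cm msB sBbd] unfolding f'_def by (simp add: mult.left_commute)
  have eq3: "(\<lambda>s. indicator {0<..<1::real} s * (f' s * r s)) = (\<lambda>s. indicator {0<..<1::real} s * ((1-s) powr c m * A s))"
  proof
    fix s :: real show "indicator {0<..<1::real} s * (f' s * r s) = indicator {0<..<1::real} s * ((1-s) powr c m * A s)"
    proof (cases "s \<in> {0<..<1}")
      case True then have "B s > 0" using Bb by (simp add: U_def)
      then show ?thesis unfolding f'_def r_def by simp
    qed simp
  qed
  have i3: "integrable lborel (\<lambda>s. indicator {0<..<1::real} s * (f' s * r s))"
    unfolding eq3 by (rule L5[OF cm mA Abd])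
  have i4: "integrable lborel (\<lambda>s. indicator {0<..<1::real} s * (s * (f' s * r s)))"
  proof -
    have "(\<lambda>s. indicator {0<..<1::real} s * (s * (f' s * r s))) = (\<lambda>s. s * (indicator {0<..<1::real} s * (f' s * r s)))"
      by (simp add: mult.left_commute)
    also have "\<dots> = (\<lambda>s. s * (indicator {0<..<1::real} s * ((1-s) powr c m * A s)))"
      using fun_cong[OF eq3] by (intro ext) simp
    also have "\<dots> = (\<lambda>s. indicator {0<..<1::real} s * ((1-s) powr c m * (s * A s)))"
      by (simp add: mult_ac)
    finally show ?thesis using L5[OF cm msA sAbd] by simp
  qed
  have fpos: "f' s > 0" if "s \<in> {0<..<1}" for s
    using Bb[of s] that by (simp add: U_def f'_def)
  have CH: "mean_prop f' \<le> mean_prop (\<lambda>s. f' s * r s) \<and>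
     ((\<forall>s t. s \<in> {0<..<1} \<longrightarrow> t \<in> {0<..<1} \<longrightarrow> s < t \<longrightarrow> r s < r t) \<longrightarrow> mean_prop f' < mean_prop (\<lambda>s. f' s * r s))"
    by (rule cheb[OF i1 i2 i3 i4 fpos]) (use rpos rmono in \<open>auto simp: U_def\<close>)
  have "(R2 m > 0 \<and> (\<exists>i\<in>{1..k} - {m}. R2 i > 0)) \<Longrightarrow>
     (\<forall>s t. s \<in> {0<..<1} \<longrightarrow> t \<in> {0<..<1} \<longrightarrow> s < t \<longrightarrow> r s < r t)"
    using rmono by (auto simp: U_def I_def)
  then show ?thesis using CH e1 e2 by auto
qed

end
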